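(* Let $\mathbf{F}$ be a foliage tree and $X$ a topological space. (a) $\mathbf{F}$ grows into $X$ if and only if $\varnothing\notin\mathrm{Rise}_{\mathbf{F}}(X)$. (b) If $\mathbf{F}$ is a $\pi$-tree on $X$ and $p\in X$, then: (b1) the family $\{\mathrm{rise}_{\mathbf{F}}(p,U): U\text{ a neighbourhood of }p\text{ in }X\}$ has the finite intersection property; (b2) $\bigcap\{\mathrm{rise}_{\mathbf{F}}(p,U): U\text{ a neighbourhood of }p\text{ in }X\}=\varnothing$; (b3) $\mathrm{rise}_{\mathbf{F}}(p,U)$ is an infinite subset of $\omega$ for every neighbourhood $U$ of $p$ in $X$.
   Context: Neighbourhoods are not necessarily open. $\omega=\{0,1,2,\dots\}$, ${}^{<\omega}\omega$ is the set of finite sequences of natural numbers. A tree is a strict partial order in which the set of predecessors of every node is well-ordered; $\mathrm{height}(x)$ is the ordinal isomorphic to the set of predecessors of $x$; a branch is a maximal chain; $\mathrm{sons}(x)$ is the set of immediate successors of $x$; $0$ denotes the least node. A foliage tree is a pair $\mathbf{F}=(T,l)$ with $T$ a tree (skeleton) and $l$ a function on its nodes, $\mathbf{F}_x:=l(x)$; tree notions apply via the skeleton. $\mathrm{shoot}_{\mathbf{F}}(v)=\{\bigcup_{x\in C}\mathbf{F}_x: C\text{ a cofinite subset of }\mathrm{sons}_{\mathbf{F}}(v)\}$; $\mathrm{scope}_{\mathbf{F}}(p)=\{x:p\in\mathbf{F}_x\}$. For families $\gamma,\delta$ of sets, $\gamma\gg\delta$ means every nonempty $D\in\delta$ contains some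 nonempty $G\in\gamma$. $\mathrm{rise}_{\mathbf{F}}(p,U)=\{\mathrm{height}_{\mathbf{F}}(v): v\in\mathrm{scope}_{\mathbf{F}}(p)\text{ and }\mathrm{shoot}_{\mathbf{F}}(v)\gg\{U\}\}$; $\mathrm{Rise}_{\mathbf{F}}(X)=\{\mathrm{rise}_{\mathbf{F}}(p,U):p\in X,\ U\text{ a neighbourhood of }p\text{ in }X\}$. A family has the finite intersection property if every finite nonempty subfamily has nonempty intersection. $\mathbf{F}$ is locally strict if each non-maximal leaf $\mathbf{F}_x$ is the disjoint union of $\mathbf{F}_s$, $s\in\mathrm{sons}(x)$; has strict branches if it has a node and for each branch $B$, $\bigcap_{x\in B}\mathbf{F}_x$ is a singleton; is open in $X$ if all leaves are open in $X$; is a foliage $\omega,\omega$-tree if its skeleton is order-isomorphic to $({}^{<\omega}\omega,\subsetneq)$. A Baire foliage tree on $X$: open in $X$, locally strict foliage $\omega,\omega$-tree with strict branches and $\mathbf{F}_{0_{\mathbf{F}}}=X$. $\mathbf{F}$ grows into $X$ if for every $p\in X$ and neighbourhood $U$ of $p$ there is $z\in\mathrm{scope}_{\mathbf{F}}(p)$ with $\mathrm{shoot}_{\mathbf{F}}(z)\gg\{U\}$. A $\pi$-tree on $X$ is a Baire foliage tree on $X$ that grows into $X$. *)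

theory Defs
  imports "HOL-Analysis.Analysis" "HOL-Library.Sublist"
begin

text \<open>A foliage tree is given by a node set N, a strict order R (pairs (x,y) mean x < y)
  and a leaf function l.\<close>

definition preds :: "'n rel \<Rightarrow> 'n \<Rightarrow> 'n set" where
  "preds R x = {y. (y, x) \<in> R}"

definition is_tree :: "'n set \<Rightarrow> 'n rel \<Rightarrow> bool" where
  "is_tree N R \<longleftrightarrow> R \<subseteq> N \<times> N \<and> irrefl R \<and> trans R \<and>
     (\<forall>x\<in>N. (\<forall>a\<in>preds R x. \<forall>b\<in>preds R x. a = b \<or> (a, b) \<in> R \<or> (b, a) \<in> R) \<and>
              (\<forall>S. S \<subseteq> preds R x \<and> S \<noteq> {} \<longrightarrow> (\<exists>m\<in>S. \<forall>s\<in>S. s \<noteq> m \<longrightarrow> (m, s) \<in> R)))"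

definition foliage_tree :: "'n set \<Rightarrow> 'n rel \<Rightarrow> ('n \<Rightarrow> 'a set) \<Rightarrow> bool" where
  "foliage_tree N R l \<longleftrightarrow> is_tree N R"

text \<open>Height: the order type of the set of predecessors.  It is represented as the
  cardinality of the predecessor set (a natural number); this equals the ordinal height
  whenever it is finite.\<close>
definition height :: "'n rel \<Rightarrow> 'n \<Rightarrow> nat" where
  "height R x = card (preds R x)"

definition sons :: "'n set \<Rightarrow> 'n rel \<Rightarrow> 'n \<Rightarrow> 'n set" where
  "sons N R v = {s\<in>N. (v, s) \<in> R \<and> \<not> (\<exists>u. (v, u) \<in> R \<and> (u, s) \<in> R)}"

definition shoot :: "'n set \<Rightarrow> 'n rel \<Rightarrow> ('n \<Rightarrow> 'a set) \<Rightarrow> 'n \<Rightarrow> 'a set set" where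
  "shoot N R l v = {\<Union> (l ` C) | C. C \<subseteq> sons N R v \<and> finite (sons N R v - C)}"

definition scope :: "'n set \<Rightarrow> ('n \<Rightarrow> 'a set) \<Rightarrow> 'a \<Rightarrow> 'n set" where
  "scope N l p = {x\<in>N. p \<in> l x}"

definition refines :: "'a set set \<Rightarrow> 'a set set \<Rightarrow> bool" (infix "\<ggreater>" 50) where
  "\<gamma> \<ggreater> \<delta> \<longleftrightarrow> (\<forall>D\<in>\<delta>. D \<noteq> {} \<longrightarrow> (\<exists>G\<in>\<gamma>. G \<noteq> {} \<and> G \<subseteq> D))"

definition nbhd :: "'a topology \<Rightarrow> 'a \<Rightarrow> 'a set \<Rightarrow> bool" where
  "nbhd X p U \<longleftrightarrow> U \<subseteq> topspace X \<and> (\<exists>V. openin X V \<and> p \<in> V \<and> V \<subseteq> U)"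

definition rise :: "'n set \<Rightarrow> 'n rel \<Rightarrow> ('n \<Rightarrow> 'a set) \<Rightarrow> 'a \<Rightarrow> 'a set \<Rightarrow> nat set" where
  "rise N R l p U = {height R v | v. v \<in> scope N l p \<and> shoot N R l v \<ggreater> {U}}"

definition Rise :: "'n set \<Rightarrow> 'n rel \<Rightarrow> ('n \<Rightarrow> 'a set) \<Rightarrow> 'a topology \<Rightarrow> nat set set" where
  "Rise N R l X = {rise N R l p U | p U. p \<in> topspace X \<and> nbhd X p U}"

definition fip :: "'b set set \<Rightarrow> bool" where
  "fip \<F> \<longleftrightarrow> (\<forall>\<G>. \<G> \<subseteq> \<F> \<and> finite \<G> \<and> \<G> \<noteq> {} \<longrightarrow> \<Inter> \<G> \<noteq> {})"

definition locally_strict :: "'n set \<Rightarrow> 'n rel \<Rightarrow> ('n \<Rightarrow> 'a set) \<Rightarrow> bool" where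
  "locally_strict N R l \<longleftrightarrow>
     (\<forall>x\<in>N. (\<exists>y\<in>N. (x, y) \<in> R) \<longrightarrow>
        l x = \<Union> (l ` sons N R x) \<and> disjoint_family_on l (sons N R x))"

definition is_branch :: "'n set \<Rightarrow> 'n rel \<Rightarrow> 'n set \<Rightarrow> bool" where
  "is_branch N R B \<longleftrightarrow> B \<subseteq> N \<and> (\<forall>x\<in>B. \<forall>y\<in>B. x = y \<or> (x, y) \<in> R \<or> (y, x) \<in> R) \<and>
     (\<forall>C. C \<subseteq> N \<and> B \<subseteq> C \<and> (\<forall>x\<in>C. \<forall>y\<in>C. x = y \<or> (x, y) \<in> R \<or> (y, x) \<in> R) \<longrightarrow> C = B)"

definition strict_branches :: "'n set \<Rightarrow> 'n rel \<Rightarrow> ('n \<Rightarrow> 'a set) \<Rightarrow> bool" where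
  "strict_branches N R l \<longleftrightarrow> N \<noteq> {} \<and>
     (\<forall>B. is_branch N R B \<longrightarrow> (\<exists>q. (\<Inter>x\<in>B. l x) = {q}))"

definition open_in_space :: "'n set \<Rightarrow> ('n \<Rightarrow> 'a set) \<Rightarrow> 'a topology \<Rightarrow> bool" where
  "open_in_space N l X \<longleftrightarrow> (\<forall>x\<in>N. openin X (l x))"

definition omega_omega_tree :: "'n set \<Rightarrow> 'n rel \<Rightarrow> bool" where
  "omega_omega_tree N R \<longleftrightarrow> (\<exists>f. bij_betw f N (UNIV :: nat list set) \<and>
     (\<forall>x\<in>N. \<forall>y\<in>N. (x, y) \<in> R \<longleftrightarrow> strict_prefix (f x) (f y)))"

definition root :: "'n set \<Rightarrow> 'n rel \<Rightarrow> 'n" where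
  "root N R = (THE r. r \<in> N \<and> (\<forall>x\<in>N. x \<noteq> r \<longrightarrow> (r, x) \<in> R))"

definition baire_foliage_tree :: "'n set \<Rightarrow> 'n rel \<Rightarrow> ('n \<Rightarrow> 'a set) \<Rightarrow> 'a topology \<Rightarrow> bool" where
  "baire_foliage_tree N R l X \<longleftrightarrow> foliage_tree N R l \<and> open_in_space N l X \<and>
     locally_strict N R l \<and> omega_omega_tree N R \<and> strict_branches N R l \<and>
     l (root N R) = topspace X"

definition grows_into :: "'n set \<Rightarrow> 'n rel \<Rightarrow> ('n \<Rightarrow> 'a set) \<Rightarrow> 'a topology \<Rightarrow> bool" where
  "grows_into N R l X \<longleftrightarrow>
     (\<forall>p\<in>topspace X. \<forall>U. nbhd X p U \<longrightarrow> (\<exists>z\<in>scope N l p. shoot N R l z \<ggreater> {U}))"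

definition pi_tree :: "'n set \<Rightarrow> 'n rel \<Rightarrow> ('n \<Rightarrow> 'a set) \<Rightarrow> 'a topology \<Rightarrow> bool" where
  "pi_tree N R l X \<longleftrightarrow> baire_foliage_tree N R l X \<and> grows_into N R l X"

end

theory Submission imports Defs begin

locale ootree =
  fixes N :: "'n set" and R :: "'n rel" and f :: "'n \<Rightarrow> nat list"
  assumes bij: "bij_betw f N UNIV"
    and ord: "\<forall>x\<in>N. \<forall>y\<in>N. (x, y) \<in> R \<longleftrightarrow> strict_prefix (f x) (f y)"
    and sub: "R \<subseteq> N \<times> N"
begin

definition g where "g = inv_into N f"

lemma g_in[simp]: "g xs \<in> N"
proof -
  have "xs \<in> f ` N" using bij unfolding bij_betw_def by simp
  then show ?thesis unfolding g_def by (rule inv_into_into)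
qed

lemma f_g[simp]: "f (g xs) = xs"
proof -
  have "xs \<in> f ` N" using bij unfolding bij_betw_def by simp
  then show ?thesis unfolding g_def by (rule f_inv_into_f)
qed

lemma g_f[simp]: "x \<in> N \<Longrightarrow> g (f x) = x"
proof -
  assume x: "x \<in> N"
  have "inj_on f N" using bij unfolding bij_betw_def by simp
  then show ?thesis unfolding g_def using x by (rule inv_into_f_f)
qed

lemma g_inj: "g xs = g ys \<longleftrightarrow> xs = ys"
proof
  assume "g xs = g ys"
  then have "f (g xs) = f (g ys)" by simp
  then show "xs = ys" by simp
qed simp

lemma R_g: "(g xs, g ys) \<in> R \<longleftrightarrow> strict_prefix xs ys"
proof -
  have "(g xs, g ys) \<in> R \<longleftrightarrow> strict_prefix (f (g xs)) (f (g ys))"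
    using ord g_in by blast
  then show ?thesis by simp
qed

lemma N_eq: "N = range g"
proof
  show "N \<subseteq> range g"
  proof
    fix x assume "x \<in> N"
    then have "x = g (f x)" by simp
    then show "x \<in> range g" by blast
  qed
qed auto

lemma sons_g: "sons N R (g xs) = range (\<lambda>i. g (xs @ [i]))"
proof (rule set_eqI, rule iffI)
  fix s assume s: "s \<in> sons N R (g xs)"
  then have sN: "s \<in> N" and r: "(g xs, s) \<in> R" and nu: "\<not> (\<exists>u. (g xs, u) \<in> R \<and> (u, s) \<in> R)"
    unfolding sons_def by blast+
  obtain ys where ys: "s = g ys" using sN N_eq by blast
  have sp: "strict_prefix xs ys" using r unfolding ys R_g .
  then obtain zs where zs: "ys = xs @ zs" "zs \<noteq> []"
    unfolding strict_prefix_def prefix_def by blast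
  have "length zs = 1"
  proof (rule ccontr)
    assume "length zs \<noteq> 1"
    then obtain a b rest where abr: "zs = a # b # rest" using zs(2)
      by (cases zs; cases "tl zs") auto
    have "strict_prefix xs (xs @ [a])" by (rule strict_prefixI') simp
    then have 1: "(g xs, g (xs @ [a])) \<in> R" unfolding R_g .
    have "strict_prefix (xs @ [a]) ys" using zs(1) abr by (intro strict_prefixI'[where z=b and zs=rest]) simp
    then have 2: "(g (xs @ [a]), s) \<in> R" unfolding ys R_g .
    show False using nu 1 2 by blast
  qed
  then obtain i where "zs = [i]" by (cases zs) auto
  then show "s \<in> range (\<lambda>i. g (xs @ [i]))" using ys zs by auto
next
  fix s assume "s \<in> range (\<lambda>i. g (xs @ [i]))"
  then obtain i where s: "s = g (xs @ [i])" by auto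
  have "strict_prefix xs (xs @ [i])" by (rule strict_prefixI') simp
  then have r: "(g xs, s) \<in> R" unfolding s R_g .
  have nu: "\<not> (\<exists>u. (g xs, u) \<in> R \<and> (u, s) \<in> R)"
  proof
    assume "\<exists>u. (g xs, u) \<in> R \<and> (u, s) \<in> R"
    then obtain u where u: "(g xs, u) \<in> R" "(u, s) \<in> R" by blast
    then have "u \<in> N" using sub by blast
    then obtain us where us: "u = g us" using N_eq by blast
    have u1: "strict_prefix xs us" using u(1) unfolding us R_g .
    have u2: "strict_prefix us (xs @ [i])" using u(2) unfolding us s R_g .
    have "length xs < length us" by (rule prefix_length_less[OF u1])
    moreover have "length us < length (xs @ [i])" by (rule prefix_length_less[OF u2])
    ultimately show False by simp
  qed
  have "s \<in> N" unfolding s by (rule g_in)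
  then show "s \<in> sons N R (g xs)" unfolding sons_def using r nu by blast
qed

lemma height_g: "height R (g xs) = length xs"
proof -
  have "preds R (g xs) = g ` {ys. strict_prefix ys xs}"
  proof
    show "preds R (g xs) \<subseteq> g ` {ys. strict_prefix ys xs}"
    proof
      fix y assume "y \<in> preds R (g xs)"
      then have "(y, g xs) \<in> R" by (simp add: preds_def)
      moreover then have "y \<in> N" using sub by auto
      then obtain ys where "y = g ys" using N_eq by auto
      ultimately show "y \<in> g ` {ys. strict_prefix ys xs}" using R_g by auto
    qed
    show "g ` {ys. strict_prefix ys xs} \<subseteq> preds R (g xs)"
      using R_g by (auto simp: preds_def)
  qed
  also have "{ys. strict_prefix ys xs} = (\<lambda>k. take k xs) ` {..<length xs}"
  proof
    show "{ys. strict_prefix ys xs} \<subseteq> (\<lambda>k. take k xs) ` {..<length xs}"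
    proof
      fix ys assume "ys \<in> {ys. strict_prefix ys xs}"
      then obtain zs where "xs = ys @ zs" "zs \<noteq> []" by (auto simp: strict_prefix_def prefix_def)
      then show "ys \<in> (\<lambda>k. take k xs) ` {..<length xs}"
        by (intro image_eqI[where x="length ys"]) auto
    qed
    show "(\<lambda>k. take k xs) ` {..<length xs} \<subseteq> {ys. strict_prefix ys xs}"
    proof
      fix ys assume "ys \<in> (\<lambda>k. take k xs) ` {..<length xs}"
      then obtain k where k: "k < length xs" "ys = take k xs" by auto
      then have "xs = ys @ drop k xs" "drop k xs \<noteq> []" by auto
      then show "ys \<in> {ys. strict_prefix ys xs}"
        by (metis (mono_tags) mem_Collect_eq neq_Nil_conv strict_prefixI')
    qed
  qed
  finally have P: "preds R (g xs) = (g \<circ> (\<lambda>k. take k xs)) ` {..<length xs}" by (simp only: image_comp)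
  have I: "inj_on (g \<circ> (\<lambda>k. take k xs)) {..<length xs}"
  proof (rule inj_onI)
    fix a b assume ab: "a \<in> {..<length xs}" "b \<in> {..<length xs}"
      "(g \<circ> (\<lambda>k. take k xs)) a = (g \<circ> (\<lambda>k. take k xs)) b"
    then have "length (take a xs) = length (take b xs)" by (simp add: g_inj)
    then show "a = b" using ab by simp
  qed
  have "card (preds R (g xs)) = card {..<length xs}"
    by (subst P) (rule card_image[OF I])
  then show ?thesis unfolding height_def by (simp only: card_lessThan)
qed

lemma root_g: "root N R = g []"
  unfolding root_def
proof (rule the_equality)
  show "g [] \<in> N \<and> (\<forall>x\<in>N. x \<noteq> g [] \<longrightarrow> (g [], x) \<in> R)"
  proof (simp, intro ballI impI)
    fix x assume "x \<in> N" "x \<noteq> g []"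
    then obtain ys where "x = g ys" "ys \<noteq> []" using N_eq by auto
    then show "(g [], x) \<in> R" using R_g by (cases ys) auto
  qed
  fix r assume r: "r \<in> N \<and> (\<forall>x\<in>N. x \<noteq> r \<longrightarrow> (r, x) \<in> R)"
  show "r = g []"
  proof (rule ccontr)
    assume "r \<noteq> g []"
    then have "(r, g []) \<in> R" using r by auto
    moreover obtain ys where "r = g ys" using r N_eq by auto
    ultimately show False using R_g by simp
  qed
qed

lemma nonmax: "\<exists>y\<in>N. (g xs, y) \<in> R"
proof
  show "(g xs, g (xs @ [0])) \<in> R" unfolding R_g by (rule strict_prefixI') simp
qed simp

end

locale ootree_ls = ootree N R f for N :: "'n set" and R and f +
  fixes l :: "'n \<Rightarrow> 'a set"
  assumes ls: "locally_strict N R l"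
begin

lemma ls_at: "l (g xs) = \<Union> (l ` sons N R (g xs)) \<and> disjoint_family_on l (sons N R (g xs))"
proof -
  have "\<forall>x\<in>N. (\<exists>y\<in>N. (x, y) \<in> R) \<longrightarrow>
        l x = \<Union> (l ` sons N R x) \<and> disjoint_family_on l (sons N R x)"
    using ls unfolding locally_strict_def by simp
  then show ?thesis using nonmax[of xs] g_in[of xs] by blast
qed

lemma L_union: "l (g xs) = (\<Union>i. l (g (xs @ [i])))"
proof -
  have "l (g xs) = \<Union> (l ` sons N R (g xs))"
    using ls_at by blast
  then show ?thesis by (simp add: sons_g image_comp)
qed

lemma L_disj: "i \<noteq> j \<Longrightarrow> l (g (xs @ [i])) \<inter> l (g (xs @ [j])) = {}"
proof -
  assume ij: "i \<noteq> j"
  have "disjoint_family_on l (sons N R (g xs))"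
    using ls_at by blast
  moreover have "g (xs @ [i]) \<in> sons N R (g xs)" "g (xs @ [j]) \<in> sons N R (g xs)"
    by (auto simp: sons_g)
  moreover have "g (xs @ [i]) \<noteq> g (xs @ [j])" using ij by (simp add: g_inj)
  ultimately show ?thesis unfolding disjoint_family_on_def by blast
qed

lemma L_mono: "l (g (xs @ ys)) \<subseteq> l (g xs)"
proof (induction ys rule: rev_induct)
  case Nil then show ?case by simp
next
  case (snoc y ys)
  have "l (g ((xs @ ys) @ [y])) \<subseteq> (\<Union>i. l (g ((xs @ ys) @ [i])))" by blast
  then have "l (g ((xs @ ys) @ [y])) \<subseteq> l (g (xs @ ys))"
    using L_union[of "xs @ ys"] by simp
  then have "l (g ((xs @ ys) @ [y])) \<subseteq> l (g xs)" using snoc.IH by (rule subset_trans)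
  then show ?case by simp
qed

lemma L_exists: "p \<in> l (g []) \<Longrightarrow> \<exists>xs. length xs = n \<and> p \<in> l (g xs)"
proof (induction n)
  case 0 then show ?case by auto
next
  case (Suc n)
  then obtain xs where "length xs = n" "p \<in> l (g xs)" by auto
  then obtain i where "p \<in> l (g (xs @ [i]))" using L_union[of xs] by auto
  then show ?case using \<open>length xs = n\<close> by (intro exI[where x="xs @ [i]"]) auto
qed

lemma L_unique: "length xs = length ys \<Longrightarrow> p \<in> l (g xs) \<Longrightarrow> p \<in> l (g ys) \<Longrightarrow> xs = ys"
proof (induction xs arbitrary: ys rule: rev_induct)
  case Nil then show ?case by simp
next
  case (snoc x xs)
  have "ys \<noteq> []" using snoc.prems(1) by auto
  then obtain ys' y where ys: "ys = ys' @ [y]" by (cases ys rule: rev_cases) auto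
  have "p \<in> l (g xs)" using snoc.prems(2) L_mono[of xs "[x]"] by blast
  moreover have "p \<in> l (g ys')" using snoc.prems(3) ys L_mono[of ys' "[y]"] by blast
  moreover have "length xs = length ys'" using snoc.prems(1) ys by simp
  ultimately have "xs = ys'" using snoc.IH by blast
  moreover have "x = y"
  proof (rule ccontr)
    assume "x \<noteq> y"
    then have "l (g (xs @ [x])) \<inter> l (g (xs @ [y])) = {}" by (rule L_disj)
    then show False using snoc.prems(2,3) ys \<open>xs = ys'\<close> by blast
  qed
  ultimately show ?case using ys by simp
qed

lemma L_nonempty:
  assumes sb: "strict_branches N R l"
  shows "l (g xs) \<noteq> {}"
proof -
  define s where "s k = (if k < length xs then xs ! k else 0)" for k
  define h where "h k = map s [0..<k]" for k
  define B where "B = range (\<lambda>k. g (h k))"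
  have lh[simp]: "length (h k) = k" for k by (simp add: h_def)
  have pre: "prefix (h k) (h m)" if "k \<le> m" for k m
  proof -
    have "[0..<k + (m - k)] = [0..<k] @ [k..<k + (m - k)]"
      by (rule upt_add_eq_append) simp
    then have "[0..<m] = [0..<k] @ [k..<m]" using that by simp
    then have "h m = h k @ map s [k..<m]" by (simp add: h_def)
    then show ?thesis unfolding prefix_def by blast
  qed
  have cmp: "g (h k) = g (h m) \<or> (g (h k), g (h m)) \<in> R \<or> (g (h m), g (h k)) \<in> R" for k m
  proof (cases "k \<le> m")
    case True
    then have "prefix (h k) (h m)" by (rule pre)
    then have "h k = h m \<or> strict_prefix (h k) (h m)" unfolding strict_prefix_def by blast
    then show ?thesis unfolding R_g g_inj by auto
  next
    case False
    then have "prefix (h m) (h k)" by (intro pre) simp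
    then have "h m = h k \<or> strict_prefix (h m) (h k)" unfolding strict_prefix_def by blast
    then show ?thesis unfolding R_g g_inj by auto
  qed
  have hx: "h (length xs) = xs"
    by (rule nth_equalityI) (simp_all add: h_def s_def)
  have br: "is_branch N R B"
    unfolding is_branch_def
  proof (intro conjI allI impI)
    show "B \<subseteq> N" unfolding B_def by auto
    show "\<forall>x\<in>B. \<forall>y\<in>B. x = y \<or> (x, y) \<in> R \<or> (y, x) \<in> R"
    proof (intro ballI)
      fix x y assume "x \<in> B" "y \<in> B"
      then obtain k m where "x = g (h k)" "y = g (h m)" unfolding B_def by blast
      then show "x = y \<or> (x, y) \<in> R \<or> (y, x) \<in> R" using cmp[of k m] by simp
    qed
    fix C assume C: "C \<subseteq> N \<and> B \<subseteq> C \<and> (\<forall>x\<in>C. \<forall>y\<in>C. x = y \<or> (x, y) \<in> R \<or> (y, x) \<in> R)"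
    show "C = B"
    proof
      show "B \<subseteq> C" using C by blast
      show "C \<subseteq> B"
      proof
        fix x assume xC: "x \<in> C"
        have CN: "C \<subseteq> N" and BC: "B \<subseteq> C"
          and Cch: "\<forall>x\<in>C. \<forall>y\<in>C. x = y \<or> (x, y) \<in> R \<or> (y, x) \<in> R" using C by simp_all
        have "x \<in> N" using xC CN by (rule subsetD[rotated])
        then obtain ys where ys: "x = g ys" using N_eq by blast
        define b where "b = g (h (length ys))"
        have bB: "b \<in> B" unfolding B_def b_def by (rule rangeI)
        then have bC: "b \<in> C" using BC by (rule subsetD[rotated])
        have "x = b \<or> (x, b) \<in> R \<or> (b, x) \<in> R" using Cch xC bC by blast
        then have "g ys = b \<or> (g ys, b) \<in> R \<or> (b, g ys) \<in> R" by (simp only: ys)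
        then have 3: "g ys = b \<or> strict_prefix ys (h (length ys)) \<or> strict_prefix (h (length ys)) ys"
          by (simp only: b_def R_g)
        have n1: "\<not> strict_prefix ys (h (length ys))"
        proof
          assume "strict_prefix ys (h (length ys))"
          then have "length ys < length (h (length ys))" by (rule prefix_length_less)
          then show False by simp
        qed
        have n2: "\<not> strict_prefix (h (length ys)) ys"
        proof
          assume "strict_prefix (h (length ys)) ys"
          then have "length (h (length ys)) < length ys" by (rule prefix_length_less)
          then show False by simp
        qed
        have "g ys = b" using 3 n1 n2 by blast
        then show "x \<in> B" using bB ys by simp
      qed
    qed
  qed
  then obtain q where q: "(\<Inter>x\<in>B. l x) = {q}" using sb unfolding strict_branches_def by blast
  have "g xs = g (h (length xs))" using hx by simp
  then have "g xs \<in> B" unfolding B_def by blast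
  then have "q \<in> l (g xs)" using q by blast
  then show ?thesis by blast
qed

end

lemma nbhd_mem: "nbhd X p U \<Longrightarrow> p \<in> U"
  unfolding nbhd_def by blast

lemma nbhd_Int: "nbhd X p U \<Longrightarrow> nbhd X p V \<Longrightarrow> nbhd X p (U \<inter> V)"
proof -
  assume "nbhd X p U" "nbhd X p V"
  then obtain U' V' where "U \<subseteq> topspace X" "openin X U'" "p \<in> U'" "U' \<subseteq> U"
    "openin X V'" "p \<in> V'" "V' \<subseteq> V" unfolding nbhd_def by blast
  then show ?thesis unfolding nbhd_def
    by (intro conjI exI[where x="U' \<inter> V'"]) auto
qed

lemma nbhd_Inter: "finite F \<Longrightarrow> F \<noteq> {} \<Longrightarrow> (\<forall>U\<in>F. nbhd X p U) \<Longrightarrow> nbhd X p (\<Inter>F)"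
proof (induction F rule: finite_ne_induct)
  case (singleton x) then show ?case by simp
next
  case (insert x F)
  then have "nbhd X p (x \<inter> \<Inter>F)" by (intro nbhd_Int) simp_all
  then show ?case by simp
qed

lemma rise_mono: "U \<subseteq> V \<Longrightarrow> p \<in> U \<Longrightarrow> rise N R l p U \<subseteq> rise N R l p V"
proof
  fix n assume UV: "U \<subseteq> V" and pU: "p \<in> U" and n: "n \<in> rise N R l p U"
  then obtain v where v: "n = height R v" "v \<in> scope N l p" "shoot N R l v \<ggreater> {U}"
    unfolding rise_def by blast
  have "U \<noteq> {}" using pU by blast
  then obtain G where "G \<in> shoot N R l v" "G \<noteq> {}" "G \<subseteq> U" using v(3) unfolding refines_def by blast
  then have "shoot N R l v \<ggreater> {V}" unfolding refines_def using UV by blast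
  then show "n \<in> rise N R l p V" unfolding rise_def using v by blast
qed

lemma rise_empty: "rise N R l p U = {} \<longleftrightarrow> \<not> (\<exists>z\<in>scope N l p. shoot N R l z \<ggreater> {U})"
  unfolding rise_def by blast

lemma part_a: "grows_into N R l X \<longleftrightarrow> {} \<notin> Rise N R l X"
proof
  assume g: "grows_into N R l X"
  show "{} \<notin> Rise N R l X"
  proof
    assume "{} \<in> Rise N R l X"
    then obtain p U where "p \<in> topspace X" "nbhd X p U" "rise N R l p U = {}"
      unfolding Rise_def by blast
    then show False using g unfolding grows_into_def rise_empty by blast
  qed
next
  assume e: "{} \<notin> Rise N R l X"
  show "grows_into N R l X" unfolding grows_into_def
  proof (intro ballI allI impI)
    fix p U assume "p \<in> topspace X" "nbhd X p U"
    then have "rise N R l p U \<in> Rise N R l X" unfolding Rise_def by blast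
    then have "rise N R l p U \<noteq> {}" using e by (cases "rise N R l p U = {}") simp_all
    then show "\<exists>z\<in>scope N l p. shoot N R l z \<ggreater> {U}" unfolding rise_empty by blast
  qed
qed

lemma part_b2:
  assumes pi: "pi_tree N R l X" and p: "p \<in> topspace X"
  shows "\<exists>U. nbhd X p U \<and> n \<notin> rise N R l p U"
proof -
  have bf: "baire_foliage_tree N R l X" using pi unfolding pi_tree_def by blast
  then have "omega_omega_tree N R" by (simp add: baire_foliage_tree_def)
  then obtain f where f: "bij_betw f N (UNIV :: nat list set)"
    "\<forall>x\<in>N. \<forall>y\<in>N. (x, y) \<in> R \<longleftrightarrow> strict_prefix (f x) (f y)"
    unfolding omega_omega_tree_def by blast
  have "is_tree N R" using bf by (simp add: baire_foliage_tree_def foliage_tree_def)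
  then have sub: "R \<subseteq> N \<times> N" unfolding is_tree_def by (rule conjunct1)
  have lsr: "locally_strict N R l" and sb: "strict_branches N R l"
    and op: "open_in_space N l X" and rt: "l (root N R) = topspace X"
    using bf by (simp_all add: baire_foliage_tree_def)
  interpret T: ootree_ls N R f l
  proof
    show "bij_betw f N UNIV" by (rule f(1))
    show "\<forall>x\<in>N. \<forall>y\<in>N. ((x, y) \<in> R) = strict_prefix (f x) (f y)" by (rule f(2))
    show "R \<subseteq> N \<times> N" by (rule sub)
    show "locally_strict N R l" by (rule lsr)
  qed
  have p0: "p \<in> l (T.g [])" using p rt T.root_g by simp
  obtain w where w: "length w = Suc n" "p \<in> l (T.g w)" using T.L_exists[OF p0] by blast
  define U where "U = l (T.g w)"
  have "l (T.g ([] @ w)) \<subseteq> l (T.g [])" by (rule T.L_mono)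
  then have Utop: "U \<subseteq> topspace X" using rt T.root_g unfolding U_def by simp
  have "openin X U" using op unfolding open_in_space_def U_def by simp
  then have nU: "nbhd X p U" unfolding nbhd_def using Utop w(2) U_def by blast
  have "n \<notin> rise N R l p U"
  proof
    assume "n \<in> rise N R l p U"
    then obtain v where v: "n = height R v" "v \<in> scope N l p" "shoot N R l v \<ggreater> {U}"
      unfolding rise_def by blast
    have "v \<in> N" using v(2) unfolding scope_def by blast
    then obtain zs where zs: "v = T.g zs" using T.N_eq by blast
    have lzs: "length zs = n" using v(1) zs T.height_g by simp
    have pz: "p \<in> l (T.g zs)" using v(2) zs unfolding scope_def by blast
    define w0 where "w0 = take n w"
    have w0d: "w = w0 @ drop n w" unfolding w0_def by simp
    have "length (drop n w) = 1" using w(1) by simp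
    then obtain j where j: "drop n w = [j]" by (cases "drop n w") auto
    have wj: "w = w0 @ [j]" using w0d j by simp
    have "l (T.g (w0 @ [j])) \<subseteq> l (T.g w0)" by (rule T.L_mono)
    moreover have "p \<in> l (T.g (w0 @ [j]))" using w(2) wj by simp
    ultimately have "p \<in> l (T.g w0)" by blast
    moreover have "length w0 = length zs" using lzs w(1) unfolding w0_def by simp
    ultimately have "w0 = zs" using pz T.L_unique by blast
    then have wz: "w = zs @ [j]" using wj by simp
    have "U \<noteq> {}" using w(2) U_def by blast
    then obtain G where G: "G \<in> shoot N R l v" "G \<noteq> {}" "G \<subseteq> U"
      using v(3) unfolding refines_def by blast
    then obtain C where C: "G = \<Union> (l ` C)" "C \<subseteq> sons N R v" "finite (sons N R v - C)"
      unfolding shoot_def by blast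
    have sons: "sons N R v = range (\<lambda>i. T.g (zs @ [i]))" using zs T.sons_g by simp
    have "inj (\<lambda>i. T.g (zs @ [i]))" by (rule injI) (simp add: T.g_inj)
    then have "infinite (sons N R v)" unfolding sons using range_inj_infinite by blast
    have "infinite C"
    proof
      assume "finite C"
      then have "finite (C \<union> (sons N R v - C))" using C(3) by blast
      moreover have "C \<union> (sons N R v - C) = sons N R v" using C(2) by blast
      ultimately show False using \<open>infinite (sons N R v)\<close> by simp
    qed
    then have "infinite (C - {T.g (zs @ [j])})" by simp
    then have "C - {T.g (zs @ [j])} \<noteq> {}" by (rule infinite_imp_nonempty)
    then obtain c where c: "c \<in> C" "c \<noteq> T.g (zs @ [j])" by blast
    then have "c \<in> sons N R v" using C(2) by blast
    then obtain i where i: "c = T.g (zs @ [i])" unfolding sons by blast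
    then have ij: "i \<noteq> j" using c(2) by blast
    have "l c \<subseteq> G" using C(1) c(1) by blast
    then have "l c \<subseteq> l (T.g (zs @ [j]))" using G(3) U_def wz by simp
    moreover have "l c \<inter> l (T.g (zs @ [j])) = {}" using T.L_disj[OF ij] i by simp
    moreover have "l c \<noteq> {}" using T.L_nonempty[OF sb] i by simp
    ultimately show False by blast
  qed
  then show ?thesis using nU by blast
qed

lemma part_b1:
  assumes pi: "pi_tree N R l X" and p: "p \<in> topspace X"
  shows "fip {rise N R l p U | U. nbhd X p U}"
  unfolding fip_def
proof (intro allI impI)
  fix \<G> assume G: "\<G> \<subseteq> {rise N R l p U | U. nbhd X p U} \<and> finite \<G> \<and> \<G> \<noteq> {}"
  have "\<forall>r\<in>\<G>. \<exists>U. nbhd X p U \<and> r = rise N R l p U" using G by blast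
  then obtain h where h: "\<forall>r\<in>\<G>. nbhd X p (h r) \<and> r = rise N R l p (h r)"
    by (rule bchoice[elim_format]) blast
  define W where "W = \<Inter> (h ` \<G>)"
  have "finite (h ` \<G>)" "h ` \<G> \<noteq> {}" using G by simp_all
  moreover have "\<forall>U\<in>h ` \<G>. nbhd X p U" using h by blast
  ultimately have nW: "nbhd X p W" unfolding W_def by (rule nbhd_Inter)
  have gi: "grows_into N R l X" using pi unfolding pi_tree_def by blast
  have "rise N R l p W \<noteq> {}"
    unfolding rise_empty using gi p nW unfolding grows_into_def by blast
  moreover have "rise N R l p W \<subseteq> \<Inter>\<G>"
  proof
    fix n assume n: "n \<in> rise N R l p W"
    show "n \<in> \<Inter>\<G>"
    proof
      fix r assume r: "r \<in> \<G>"
      have "W \<subseteq> h r" unfolding W_def using r by blast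
      then have "rise N R l p W \<subseteq> rise N R l p (h r)"
        using nbhd_mem[OF nW] by (rule rise_mono)
      then show "n \<in> r" using n h r by blast
    qed
  qed
  ultimately show "\<Inter>\<G> \<noteq> {}" by blast
qed

theorem lemma8:
  fixes N :: "'n set" and R :: "'n rel" and l :: "'n \<Rightarrow> 'a set" and X :: "'a topology"
  assumes "foliage_tree N R l"
  shows "(grows_into N R l X \<longleftrightarrow> {} \<notin> Rise N R l X) \<and>
         (\<forall>p. pi_tree N R l X \<and> p \<in> topspace X \<longrightarrow>
           fip {rise N R l p U | U. nbhd X p U} \<and>
           \<Inter> {rise N R l p U | U. nbhd X p U} = {} \<and>
           (\<forall>U. nbhd X p U \<longrightarrow> infinite (rise N R l p U)))"
proof (intro conjI allI impI)
  show "grows_into N R l X \<longleftrightarrow> {} \<notin> Rise N R l X" by (rule part_a)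
next
  fix p assume a: "pi_tree N R l X \<and> p \<in> topspace X"
  then have a1: "pi_tree N R l X" and a2: "p \<in> topspace X" by simp_all
  show F: "fip {rise N R l p U | U. nbhd X p U}" by (rule part_b1[OF a1 a2])
  have b2: "\<forall>n. \<exists>U. nbhd X p U \<and> n \<notin> rise N R l p U" using part_b2[OF a1 a2] by blast
  show "\<Inter> {rise N R l p U | U. nbhd X p U} = {}"
  proof (rule equals0I)
    fix n assume n: "n \<in> \<Inter> {rise N R l p U | U. nbhd X p U}"
    obtain U where "nbhd X p U" "n \<notin> rise N R l p U" using b2 by blast
    then show False using n by blast
  qed
  fix U assume U: "nbhd X p U"
  show "infinite (rise N R l p U)"
  proof
    assume fin: "finite (rise N R l p U)"
    obtain k where k: "\<forall>n. nbhd X p (k n) \<and> n \<notin> rise N R l p (k n)"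
      using b2 by metis
    define \<G> where "\<G> = insert (rise N R l p U) ((\<lambda>n. rise N R l p (k n)) ` rise N R l p U)"
    have "\<G> \<subseteq> {rise N R l p U | U. nbhd X p U}" unfolding \<G>_def using U k by blast
    moreover have "finite \<G>" unfolding \<G>_def using fin by simp
    moreover have "\<G> \<noteq> {}" unfolding \<G>_def by simp
    ultimately have "\<Inter>\<G> \<noteq> {}" using F unfolding fip_def by blast
    then obtain n where n: "n \<in> \<Inter>\<G>" by blast
    then have n1: "n \<in> rise N R l p U" unfolding \<G>_def by blast
    then have "rise N R l p (k n) \<in> \<G>" unfolding \<G>_def by blast
    then have "n \<in> rise N R l p (k n)" using n by blast
    then show False using k by blast
  qed
qed

end
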